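(* Let $n\in\mathbb N$ and $0<\gamma\le1/20$. Let $G$ be a graph of order $n$ with $(1/2-\gamma)n\le\delta(G)\le\Delta(G)\le3n/5$. Suppose that $|N(x)\triangle N(y)|\le\gamma n$ for every edge $xy\in E(G)$. Then there exists a bipartition $X,Y$ of $V(G)$ such that $\delta(G[X]),\delta(G[Y])\ge(1/2-5\gamma)n$ and $(1/2-5\gamma)n\le|X|,|Y|\le(1/2+5\gamma)n$.
   Context: $\delta(G)$ and $\Delta(G)$ are the minimum and maximum degree of $G$, $N(x)$ is the neighbourhood of $x$, and $\triangle$ denotes symmetric difference. *)

theory Defs
  imports Main "HOL-Library.Multiset" Complex_Main
begin

definition simple_graph :: "'a set \<Rightarrow> ('a \<Rightarrow> 'a \<Rightarrow> bool) \<Rightarrow> bool" where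
  "simple_graph V E \<longleftrightarrow> finite V \<and> (\<forall>x y. E x y \<longrightarrow> x \<in> V \<and> y \<in> V)
     \<and> (\<forall>x y. E x y \<longrightarrow> E y x) \<and> (\<forall>x. \<not> E x x)"

definition nbhd :: "'a set \<Rightarrow> ('a \<Rightarrow> 'a \<Rightarrow> bool) \<Rightarrow> 'a \<Rightarrow> 'a set" where
  "nbhd V E x = {y \<in> V. E x y}"

definition degree :: "'a set \<Rightarrow> ('a \<Rightarrow> 'a \<Rightarrow> bool) \<Rightarrow> 'a \<Rightarrow> nat" where
  "degree V E x = card (nbhd V E x)"

definition min_degree :: "'a set \<Rightarrow> ('a \<Rightarrow> 'a \<Rightarrow> bool) \<Rightarrow> nat" where
  "min_degree V E = Min (degree V E ` V)"

definition max_degree :: "'a set \<Rightarrow> ('a \<Rightarrow> 'a \<Rightarrow> bool) \<Rightarrow> nat" where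
  "max_degree V E = Max (degree V E ` V)"

definition induced :: "('a \<Rightarrow> 'a \<Rightarrow> bool) \<Rightarrow> 'a set \<Rightarrow> ('a \<Rightarrow> 'a \<Rightarrow> bool)" where
  "induced E X = (\<lambda>x y. x \<in> X \<and> y \<in> X \<and> E x y)"

end

theory Submission
  imports Defs
begin

lemma min_deg_ge:
  assumes "finite X" "X \<noteq> {}" "\<forall>y\<in>X. c \<le> real (degree X F y)"
  shows "c \<le> real (min_degree X F)"
proof -
  have "Min (degree X F ` X) \<in> degree X F ` X"
    using assms by (intro Min_in) auto
  then obtain y where "y \<in> X" "min_degree X F = degree X F y"
    unfolding min_degree_def by auto
  thus ?thesis using assms(3) by auto
qed

theorem proposition5p5:
  fixes V :: "'a set" and E :: "'a \<Rightarrow> 'a \<Rightarrow> bool" and n :: nat and \<gamma> :: real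
  assumes G: "simple_graph V E"
    and ne: "V \<noteq> {}"
    and order: "card V = n"
    and gpos: "0 < \<gamma>" and gsmall: "\<gamma> \<le> 1/20"
    and dlow: "(1/2 - \<gamma>) * real n \<le> real (min_degree V E)"
    and Dhigh: "real (max_degree V E) \<le> 3 * real n / 5"
    and sym: "\<forall>x y. E x y \<longrightarrow>
               real (card (nbhd V E x - nbhd V E y \<union> (nbhd V E y - nbhd V E x))) \<le> \<gamma> * real n"
  shows "\<exists>X Y. X \<union> Y = V \<and> X \<inter> Y = {}
     \<and> real (min_degree X (induced E X)) \<ge> (1/2 - 5*\<gamma>) * real n
     \<and> real (min_degree Y (induced E Y)) \<ge> (1/2 - 5*\<gamma>) * real n
     \<and> (1/2 - 5*\<gamma>) * real n \<le> real (card X) \<and> real (card X) \<le> (1/2 + 5*\<gamma>) * real n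
     \<and> (1/2 - 5*\<gamma>) * real n \<le> real (card Y) \<and> real (card Y) \<le> (1/2 + 5*\<gamma>) * real n"
proof -
  have finV: "finite V" and Ein: "\<And>x y. E x y \<Longrightarrow> x\<in>V \<and> y\<in>V"
    and Esym: "\<And>x y. E x y \<Longrightarrow> E y x" and Eirr: "\<And>x. \<not>E x x"
    using G unfolding simple_graph_def by auto
  have "0 < card V" using finV ne by (simp add: card_gt_0_iff)
  hence npos: "real n > 0" using order by simp
  define N where "N = nbhd V E"
  have Nsub: "\<And>x. N x \<subseteq> V" by (auto simp: N_def nbhd_def)
  have finN: "\<And>x. finite (N x)" using finite_subset[OF Nsub finV] .
  have memN: "\<And>x y. y \<in> N x \<longleftrightarrow> E x y" using Ein by (auto simp: N_def nbhd_def)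
  have dlo: "(1/2-\<gamma>)*n \<le> real (card (N x))" if "x\<in>V" for x
  proof -
    have "min_degree V E \<le> degree V E x" unfolding min_degree_def using finV that by (intro Min_le) auto
    hence "real (min_degree V E) \<le> real (card (N x))" by (simp add: degree_def N_def)
    thus ?thesis using dlow by linarith
  qed
  have dhi: "real (card (N x)) \<le> 3*n/5" if "x\<in>V" for x
  proof -
    have "max_degree V E \<ge> degree V E x" unfolding max_degree_def using finV that by (intro Max_ge) auto
    hence "real (max_degree V E) \<ge> real (card (N x))" by (simp add: degree_def N_def)
    thus ?thesis using Dhigh by linarith
  qed
  have sd: "real (card (N x \<inter> S)) \<le> real (card (N y \<inter> S)) + \<gamma>*n" if e: "E x y" for x y S
  proof -
    have "N x \<inter> S \<subseteq> (N y \<inter> S) \<union> (N x - N y)" by auto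
    hence "card (N x \<inter> S) \<le> card ((N y \<inter> S) \<union> (N x - N y))" by (intro card_mono) (auto simp: finN)
    moreover have "card ((N y \<inter> S) \<union> (N x - N y)) \<le> card (N y \<inter> S) + card (N x - N y)" by (rule card_Un_le)
    moreover have "card (N x - N y) \<le> card (N x - N y \<union> (N y - N x))" by (intro card_mono) (auto simp: finN)
    moreover from sym e have "real (card (N x - N y \<union> (N y - N x))) \<le> \<gamma>*n" by (simp add: N_def)
    ultimately show ?thesis by linarith
  qed
  obtain v where v: "v \<in> V" using ne by auto
  define A where "A = N v"
  have AV: "A \<subseteq> V" using Nsub by (simp add: A_def)
  define f where "f y = card (N y \<inter> A)" for y
  have out: "real (card (N u - A)) \<le> \<gamma>*n" if "u \<in> A" for u
  proof -
    have "E u v" using that Esym memN by (simp add: A_def)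
    from sd[OF this, of "V - A"] have "real (card (N u \<inter> (V-A))) \<le> real (card (N v \<inter> (V - A))) + \<gamma>*n" .
    moreover have "N v \<inter> (V - A) = {}" by (auto simp: A_def)
    moreover have "N u \<inter> (V-A) = N u - A" using Nsub by auto
    ultimately show ?thesis by simp
  qed
  have split: "card (N x) \<le> f x + card (N x - A)" for x
  proof -
    have "N x = (N x \<inter> A) \<union> (N x - A)" by auto
    hence "card (N x) = card ((N x \<inter> A) \<union> (N x - A))" by simp
    also have "\<dots> \<le> f x + card (N x - A)" unfolding f_def by (rule card_Un_le)
    finally show ?thesis .
  qed
  have fA: "(1/2-2*\<gamma>)*n \<le> real (f u)" if "u\<in>A" for u
  proof -
    have "u \<in> V" using that AV by auto
    hence "(1/2-\<gamma>)*n \<le> real (card (N u))" by (rule dlo)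
    moreover have "real (card (N u)) \<le> real (f u) + real (card (N u - A))" using split[of u] by linarith
    ultimately show ?thesis using out[OF that] by (simp add: algebra_simps)
  qed
  have fX: "(1/2-3*\<gamma>)*n \<le> real (f y)" if "f y > 0" for y
  proof -
    from that have "N y \<inter> A \<noteq> {}" by (auto simp: f_def)
    then obtain u where u: "u \<in> N y" "u \<in> A" by auto
    hence "E u y" using memN Esym by auto
    from sd[OF this, of A] have "real (f u) \<le> real (f y) + \<gamma>*n" by (simp add: f_def)
    with fA[OF u(2)] show ?thesis by (simp add: algebra_simps)
  qed
  have gap: "\<gamma>*n < (1/2-3*\<gamma>)*n"
  proof -
    have "0 < (1/2 - 4*\<gamma>) * real n" using gsmall npos by (intro mult_pos_pos) auto
    thus ?thesis by (simp add: algebra_simps)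
  qed
  define X where "X = {y\<in>V. f y > 0}"
  define Y where "Y = V - X"
  have cl1: "z \<in> X" if "E y z" "y \<in> X" for y z
  proof -
    from sd[OF that(1), of A] have "real (f y) \<le> real (f z) + \<gamma>*n" by (simp add: f_def)
    moreover have "(1/2-3*\<gamma>)*n \<le> real (f y)" using fX that(2) by (auto simp: X_def)
    ultimately have "real (f z) > 0" using gap by linarith
    thus ?thesis using Ein that by (auto simp: X_def)
  qed
  have cl2: "z \<in> Y" if "E y z" "y \<in> Y" for y z
    using cl1[of z y] Esym that Ein by (auto simp: Y_def)
  have XV: "X \<subseteq> V" and YV: "Y \<subseteq> V" by (auto simp: X_def Y_def)
  have finX: "finite X" and finY: "finite Y" using XV YV finV finite_subset by auto
  have cardXY: "card X + card Y = n" using order XV finV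
    by (metis Y_def card_Diff_subset card_mono le_add_diff_inverse finite_subset)
  have vX: "v \<in> X"
  proof -
    have "0 < (1/2-\<gamma>)*real n" using gsmall npos by (intro mult_pos_pos) auto
    hence "real (card A) > 0" using dlo[OF v] unfolding A_def by linarith
    hence "f v > 0" by (simp add: f_def A_def)
    thus ?thesis using v by (simp add: X_def)
  qed
  have Yne: "Y \<noteq> {}"
  proof
    assume Y0: "Y = {}"
    define B where "B = V - A"
    have finA: "finite A" and finB: "finite B" using AV finV by (auto simp: B_def finite_subset)
    have allX: "f y > 0" if "y \<in> V" for y using Y0 that by (auto simp: Y_def X_def)
    have lo: "real (card B) * ((1/2-3*\<gamma>)*n) \<le> (\<Sum>y\<in>B. real (f y))"
      using sum_mono[of B "\<lambda>_. (1/2-3*\<gamma>)*n" "\<lambda>y. real (f y)"] fX allX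
      by (auto simp: B_def)
    have fy: "f y = (\<Sum>a\<in>A. if E y a then 1 else 0)" for y
    proof -
      have "N y \<inter> A = {a\<in>A. E y a}" using memN by auto
      thus ?thesis by (simp add: f_def sum.If_cases finA Int_def)
    qed
    have "(\<Sum>y\<in>B. f y) = (\<Sum>y\<in>B. \<Sum>a\<in>A. if E y a then 1 else 0)" by (simp add: fy)
    also have "\<dots> = (\<Sum>a\<in>A. \<Sum>y\<in>B. if E y a then 1 else 0)" by (rule sum.swap)
    also have "\<dots> = (\<Sum>a\<in>A. card (N a - A))"
    proof (rule sum.cong)
      fix a assume "a \<in> A"
      have "N a - A = {y\<in>B. E y a}" using memN Esym Ein by (auto simp: B_def)
      thus "(\<Sum>y\<in>B. if E y a then 1 else 0) = card (N a - A)"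
        by (simp add: sum.If_cases finB Int_def)
    qed simp
    finally have eq: "(\<Sum>y\<in>B. real (f y)) = (\<Sum>a\<in>A. real (card (N a - A)))"
      by (metis of_nat_sum)
    have hi: "(\<Sum>a\<in>A. real (card (N a - A))) \<le> real (card A) * (\<gamma>*n)"
      using sum_mono[of A "\<lambda>a. real (card (N a - A))" "\<lambda>_. \<gamma>*n"] out by auto
    have cB: "real (card B) = n - real (card A)"
    proof -
      have "card B = card V - card A" using AV finV by (simp add: B_def card_Diff_subset finite_subset)
      moreover have "card A \<le> card V" using AV finV by (simp add: card_mono)
      ultimately show ?thesis using order by (simp add: of_nat_diff)
    qed
    have cA: "real (card A) \<le> 3*n/5" using dhi[OF v] by (simp add: A_def)
    have main: "real (card B) * ((1/2-3*\<gamma>)*n) \<le> real (card A) * (\<gamma>*n)"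
      using lo eq hi by linarith
    have m2: "real (card B) * (1/2-3*\<gamma>) \<le> real (card A) * \<gamma>"
      using main npos by (simp add: mult.assoc[symmetric])
    have "(2*n/5) * (1/2-3*\<gamma>) \<le> real (card B) * (1/2-3*\<gamma>)"
      using cB cA gsmall by (intro mult_right_mono) auto
    moreover have "real (card A) * \<gamma> \<le> (3*n/5) * \<gamma>"
      using cA gpos by (intro mult_right_mono) auto
    ultimately have "(2*n/5) * (1/2-3*\<gamma>) \<le> (3*n/5) * \<gamma>" using m2 by linarith
    hence "n * (1/5 - 9*\<gamma>/5) \<le> 0" by (simp add: algebra_simps)
    moreover have "n * (1/5 - 9*\<gamma>/5) > 0" using npos gsmall by (intro mult_pos_pos) auto
    ultimately show False by linarith
  qed
  have indX: "degree X (induced E X) y = card (N y)" if "y \<in> X" for y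
  proof -
    have "nbhd X (induced E X) y = N y"
      using that cl1[of y] XV Ein by (auto simp: nbhd_def induced_def N_def)
    thus ?thesis by (simp add: degree_def)
  qed
  have indY: "degree Y (induced E Y) y = card (N y)" if "y \<in> Y" for y
  proof -
    have "nbhd Y (induced E Y) y = N y"
      using that cl2[of y] YV Ein by (auto simp: nbhd_def induced_def N_def)
    thus ?thesis by (simp add: degree_def)
  qed
  have g5: "(1/2 - 5*\<gamma>) * real n \<le> (1/2 - \<gamma>) * real n" using gpos npos by (intro mult_right_mono) auto
  have g5': "(1/2 + \<gamma>) * real n \<le> (1/2 + 5*\<gamma>) * real n" using gpos npos by (intro mult_right_mono) auto
  have mX: "(1/2 - 5*\<gamma>) * real n \<le> real (min_degree X (induced E X))"
    using finX vX indX dlo XV g5 by (intro min_deg_ge) fastforce+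
  have mY: "(1/2 - 5*\<gamma>) * real n \<le> real (min_degree Y (induced E Y))"
    using finY Yne indY dlo YV g5 by (intro min_deg_ge) fastforce+
  have sz: "(1/2-\<gamma>)*n \<le> real (card S)" if "finite S" "S \<subseteq> V" "x \<in> S" "\<forall>z. E x z \<longrightarrow> z \<in> S" for S x
  proof -
    have "insert x (N x) \<subseteq> S" using that memN by auto
    hence "card (insert x (N x)) \<le> card S" using that by (intro card_mono) auto
    moreover have "x \<notin> N x" using memN Eirr by auto
    ultimately have "card (N x) + 1 \<le> card S" using finN by simp
    hence "real (card (N x)) \<le> real (card S)" by simp
    moreover have "x \<in> V" using that by auto
    ultimately show ?thesis using dlo[of x] by linarith
  qed
  obtain y where y: "y \<in> Y" using Yne by auto
  have sX: "(1/2-\<gamma>)*n \<le> real (card X)" using sz[of X v] finX XV vX cl1 by auto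
  have sY: "(1/2-\<gamma>)*n \<le> real (card Y)" using sz[of Y y] finY YV y cl2 by auto
  have rXY: "real (card X) + real (card Y) = n" using cardXY by (metis of_nat_add)
  show ?thesis
    apply (rule exI[of _ X], rule exI[of _ Y])
    using mX mY sX sY rXY g5 g5' XV by (auto simp: Y_def algebra_simps)
qed

end
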